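(* Let $n\ge 1$, let $m=(m_1,\dots,m_n)\in\mathbb Z_+^n$, and let $c_\alpha\in\mathbb C$ for $\alpha\in\mathbb Z_+^n$ with $0\le\alpha\le m$ (put $c_\alpha=0$ for all other $\alpha$). Let $P(z)=\sum_{0\le\alpha\le m}c_\alpha z^\alpha$. Let $X_0=\{\tau\in\mathbb Z^n:\tau\ge 0,\ \tau\not\ge m\}$, let $\varphi:X_0\to\mathbb C$, and let $f:\mathbb Z_+^n\to\mathbb C$ satisfy $$\sum_{0\le\alpha\le m}c_\alpha f(x+\alpha)=0\quad (x\in\mathbb Z_+^n),\qquad f(x)=\varphi(x)\quad (x\in X_0).$$ Assume that the generating function $F(z)=\sum_{x\ge 0} f(x)/z^{x+I}$ converges (absolutely) in some neighborhood of infinity $\{|z_j|>R_j,\ j=1,\dots,n\}$. Then, in that neighborhood, the following identities hold: $$P(z)F(z)=\sum_{0\le\alpha\le m}c_\alpha\Big(\sum_{\tau\ge 0,\ \tau\not\ge\alpha}\frac{\varphi(\tau)}{z^{\tau-\alpha+I}}\Big);$$ $$P(z)F(z)=\sum_{\tau\in\mathbb Z^n,\ \tau\le m,\ \tau\not\le 0}\Big(\sum_{\alpha\ge 0,\ \tau\le\alpha\le m}c_\alpha\,\varphi(\alpha-\tau)\Big)z^{\tau-I};$$ $$P(z)F(z)=P(z)\sum_{\tau\ge0,\ \tau\not\ge m}\frac{\varphi(\tau)}{z^{\tau+I}}-\sum_{\tau\ge 0,\ \tau\not\ge m}\Big(\sum_{0\le\alpha\le\tau}c_\alpha z^\alpha\Big)\frac{\varphi(\tau)}{z^{\tau+I}};$$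 $$P(z)F(z)=\sum_{\tau\ge0,\ \tau\not\ge m}\Big(\sum_{\alpha\le m,\ \alpha\not\le\tau}c_\alpha z^\alpha\Big)\frac{\varphi(\tau)}{z^{\tau+I}}.$$
   Context: For $x,y\in\mathbb Z^n$, $x\le y$ means $x_k\le y_k$ for all $k$; $x\not\ge y$ means that $x\ge y$ fails (i.e. $x_k<y_k$ for some $k$), and similarly for $\not\le$. $\mathbb Z_+^n$ is the set of integer points with nonnegative coordinates, $I=(1,\dots,1)$, and $z^x=z_1^{x_1}\cdots z_n^{x_n}$. *)

theory Defs
  imports "HOL-Analysis.Analysis"
begin

text \<open>Integer points of Z^n are vectors \<open>int ^ 'n\<close> (dimension n = CARD('n) \<ge> 1);
  the order \<open>\<le>\<close> on vectors is the componentwise one from the library.\<close>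

definition onesv :: "int ^ 'n" where
  "onesv = (\<chi> i. 1)"

definition zpow :: "complex ^ 'n \<Rightarrow> int ^ 'n \<Rightarrow> complex" where
  "zpow z x = (\<Prod>i\<in>UNIV. (z $ i) powi (x $ i))"

end

theory Submission
  imports Defs
begin

lemma has_sum_finsum:
  fixes f :: "'i \<Rightarrow> 'a \<Rightarrow> 'b::topological_comm_monoid_add"
  assumes "finite I" "\<And>i. i \<in> I \<Longrightarrow> (f i has_sum s i) A"
  shows "((\<lambda>x. \<Sum>i\<in>I. f i x) has_sum (\<Sum>i\<in>I. s i)) A"
  using assms
proof (induction I rule: finite_induct)
  case empty then show ?case by simp
next
  case (insert j I)
  have "((\<lambda>x. f j x + (\<Sum>i\<in>I. f i x)) has_sum (s j + (\<Sum>i\<in>I. s i))) A"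
    using insert by (intro has_sum_add) auto
  then show ?case using insert by simp
qed

lemma has_sum_diff':
  fixes f g :: "'a \<Rightarrow> 'b::{topological_ab_group_add}"
  assumes "(f has_sum a) A" "(g has_sum b) A"
  shows "((\<lambda>x. f x - g x) has_sum (a - b)) A"
proof -
  have "((\<lambda>x. - g x) has_sum (- b)) A" using assms(2) by (simp add: has_sum_uminus)
  from has_sum_add[OF assms(1) this] show ?thesis by simp
qed

lemma box_finite: "finite {\<alpha>::int^'n. a \<le> \<alpha> \<and> \<alpha> \<le> b}"
proof -
  have "vec_nth ` {\<alpha>::int^'n. a \<le> \<alpha> \<and> \<alpha> \<le> b} \<subseteq> PiE UNIV (\<lambda>i. {a$i..b$i})"
    by (auto simp: less_eq_vec_def)
  then have "finite (vec_nth ` {\<alpha>::int^'n. a \<le> \<alpha> \<and> \<alpha> \<le> b})"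
    by (rule finite_subset) (intro finite_PiE, auto)
  then show ?thesis
    by (rule finite_imageD) (auto simp: inj_on_def vec_eq_iff)
qed

lemma zpow_add: "(\<forall>i. z $ i \<noteq> 0) \<Longrightarrow> zpow z (a + b) = zpow z a * zpow z b"
  unfolding zpow_def by (simp add: power_int_add prod.distrib)

lemma zpow_neg: "zpow z (- a) = inverse (zpow z a)"
  unfolding zpow_def using prod_inversef[of "\<lambda>i. z $ i powi a $ i" UNIV] by (simp add: power_int_minus o_def)

lemma zpow_nz: "(\<forall>i. z $ i \<noteq> 0) \<Longrightarrow> zpow z a \<noteq> 0"
  unfolding zpow_def by simp

lemma zpow_diff: "(\<forall>i. z $ i \<noteq> 0) \<Longrightarrow> zpow z (a - b) = zpow z a / zpow z b"
  using zpow_add[of z a "-b"] zpow_neg[of z b] by (simp add: divide_inverse)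

theorem theorem1:
  fixes m :: "int ^ 'n"
    and c :: "int ^ 'n \<Rightarrow> complex"
    and \<phi> :: "int ^ 'n \<Rightarrow> complex"
    and f :: "int ^ 'n \<Rightarrow> complex"
    and R :: "real ^ 'n"
    and z :: "complex ^ 'n"
  assumes m_nonneg: "0 \<le> m"
    and c_zero: "\<And>\<alpha>. \<not> (0 \<le> \<alpha> \<and> \<alpha> \<le> m) \<Longrightarrow> c \<alpha> = 0"
    and recurrence: "\<And>x. 0 \<le> x \<Longrightarrow> (\<Sum>\<alpha>\<in>{\<alpha>. 0 \<le> \<alpha> \<and> \<alpha> \<le> m}. c \<alpha> * f (x + \<alpha>)) = 0"
    and boundary: "\<And>x. 0 \<le> x \<Longrightarrow> \<not> m \<le> x \<Longrightarrow> f x = \<phi> x"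
    and R_nonneg: "\<And>j. 0 \<le> R $ j"
    and conv: "\<And>w. (\<forall>j. norm (w $ j) > R $ j) \<Longrightarrow>
                 (\<lambda>x. norm (f x / zpow w (x + onesv))) summable_on {x. 0 \<le> x}"
    and z_in: "\<forall>j. norm (z $ j) > R $ j"
  defines "P \<equiv> (\<Sum>\<alpha>\<in>{\<alpha>. 0 \<le> \<alpha> \<and> \<alpha> \<le> m}. c \<alpha> * zpow z \<alpha>)"
    and "F \<equiv> (\<Sum>\<^sub>\<infinity>x\<in>{x. 0 \<le> x}. f x / zpow z (x + onesv))"
    and "X0 \<equiv> {\<tau>. 0 \<le> \<tau> \<and> \<not> m \<le> \<tau>}"
  shows
    "((\<forall>\<alpha>. 0 \<le> \<alpha> \<and> \<alpha> \<le> m \<longrightarrow> (\<lambda>\<tau>. \<phi> \<tau> / zpow z (\<tau> - \<alpha> + onesv)) summable_on {\<tau>. 0 \<le> \<tau> \<and> \<not> \<alpha> \<le> \<tau>})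
     \<and> P * F = (\<Sum>\<alpha>\<in>{\<alpha>. 0 \<le> \<alpha> \<and> \<alpha> \<le> m}.
                 c \<alpha> * (\<Sum>\<^sub>\<infinity>\<tau>\<in>{\<tau>. 0 \<le> \<tau> \<and> \<not> \<alpha> \<le> \<tau>}. \<phi> \<tau> / zpow z (\<tau> - \<alpha> + onesv))))
     \<and> (((\<lambda>\<tau>. (\<Sum>\<alpha>\<in>{\<alpha>. 0 \<le> \<alpha> \<and> \<tau> \<le> \<alpha> \<and> \<alpha> \<le> m}. c \<alpha> * \<phi> (\<alpha> - \<tau>)) * zpow z (\<tau> - onesv))
        has_sum (P * F)) {\<tau>. \<tau> \<le> m \<and> \<not> \<tau> \<le> 0})
     \<and> ((\<lambda>\<tau>. \<phi> \<tau> / zpow z (\<tau> + onesv)) summable_on X0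
     \<and> (\<lambda>\<tau>. (\<Sum>\<alpha>\<in>{\<alpha>. 0 \<le> \<alpha> \<and> \<alpha> \<le> \<tau>}. c \<alpha> * zpow z \<alpha>) * \<phi> \<tau> / zpow z (\<tau> + onesv)) summable_on X0
     \<and> P * F = P * (\<Sum>\<^sub>\<infinity>\<tau>\<in>X0. \<phi> \<tau> / zpow z (\<tau> + onesv))
               - (\<Sum>\<^sub>\<infinity>\<tau>\<in>X0. (\<Sum>\<alpha>\<in>{\<alpha>. 0 \<le> \<alpha> \<and> \<alpha> \<le> \<tau>}. c \<alpha> * zpow z \<alpha>) * \<phi> \<tau> / zpow z (\<tau> + onesv)))
     \<and> (((\<lambda>\<tau>. (\<Sum>\<alpha>\<in>{\<alpha>. 0 \<le> \<alpha> \<and> \<alpha> \<le> m \<and> \<not> \<alpha> \<le> \<tau>}. c \<alpha> * zpow z \<alpha>) * \<phi> \<tau> / zpow z (\<tau> + onesv))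
        has_sum (P * F)) X0)"
proof -
  let ?S = "{x::int^'n. 0 \<le> x}"
  let ?A = "{\<alpha>::int^'n. 0 \<le> \<alpha> \<and> \<alpha> \<le> m}"
  define S1 where "S1 \<alpha> = {x::int^'n. 0 \<le> x \<and> \<alpha> \<le> x}" for \<alpha>
  define S2 where "S2 \<alpha> = {x::int^'n. 0 \<le> x \<and> \<not> \<alpha> \<le> x}" for \<alpha>
  define g where "g x = f x / zpow z (x + onesv)" for x
  define h where "h \<alpha> x = f x / zpow z (x - \<alpha> + onesv)" for \<alpha> x
  define k where "k \<alpha> y = f (y + \<alpha>) / zpow z (y + onesv)" for \<alpha> y
  define p where "p \<alpha> \<tau> = \<phi> \<tau> / zpow z (\<tau> - \<alpha> + onesv)" for \<alpha> \<tau>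
  define T1 where "T1 \<alpha> = infsum (h \<alpha>) (S1 \<alpha>)" for \<alpha>
  define T2 where "T2 \<alpha> = infsum (h \<alpha>) (S2 \<alpha>)" for \<alpha>
  have finA: "finite ?A" using box_finite[of 0 m] .
  have nz: "\<forall>i. z $ i \<noteq> 0"
  proof
    fix i show "z $ i \<noteq> 0" using z_in R_nonneg[of i] by (metis norm_zero not_le)
  qed
  have "(\<lambda>x. norm (g x)) summable_on ?S" unfolding g_def using conv[OF z_in] .
  then have gsum: "g summable_on ?S" by (rule abs_summable_summable)
  have hasF: "(g has_sum F) ?S" unfolding F_def g_def[symmetric] using gsum by simp
  have h_eq: "h \<alpha> x = zpow z \<alpha> * g x" for \<alpha> x
  proof -
    have "x - \<alpha> + onesv = (x + onesv) - \<alpha>" by simp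
    then have "zpow z (x - \<alpha> + onesv) = zpow z (x + onesv) / zpow z \<alpha>"
      using zpow_diff[OF nz] by metis
    then show ?thesis unfolding h_def g_def using zpow_nz[OF nz, of \<alpha>] by simp
  qed
  have hS: "(h \<alpha> has_sum (zpow z \<alpha> * F)) ?S" for \<alpha>
    unfolding h_eq by (rule has_sum_cmult_right[OF hasF])
  have S1S: "S1 \<alpha> \<subseteq> ?S" and S2S: "S2 \<alpha> \<subseteq> ?S" for \<alpha> unfolding S1_def S2_def by auto
  have hsum1: "h \<alpha> summable_on S1 \<alpha>" for \<alpha>
    using summable_on_subset_banach[OF has_sum_imp_summable[OF hS] S1S] .
  have hsum2: "h \<alpha> summable_on S2 \<alpha>" for \<alpha>
    using summable_on_subset_banach[OF has_sum_imp_summable[OF hS] S2S] .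
  have split: "zpow z \<alpha> * F = T1 \<alpha> + T2 \<alpha>" for \<alpha>
  proof -
    have "?S = S1 \<alpha> \<union> S2 \<alpha>" "S1 \<alpha> \<inter> S2 \<alpha> = {}" unfolding S1_def S2_def by auto
    then have "infsum (h \<alpha>) ?S = T1 \<alpha> + T2 \<alpha>"
      unfolding T1_def T2_def using infsum_Un_disjoint[OF hsum1 hsum2] by simp
    then show ?thesis using hS[of \<alpha>] by (simp add: has_sum_iff)
  qed
  have kS: "(k \<alpha> has_sum T1 \<alpha>) ?S" if "0 \<le> \<alpha>" for \<alpha>
  proof -
    have "(k \<alpha> has_sum T1 \<alpha>) ?S = (h \<alpha> has_sum T1 \<alpha>) (S1 \<alpha>)"
    proof (rule has_sum_reindex_bij_witness[where j="\<lambda>y. y + \<alpha>" and i="\<lambda>x. x - \<alpha>"])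
      fix a assume "a \<in> ?S"
      then show "a + \<alpha> \<in> S1 \<alpha>" using that unfolding S1_def by (auto simp: less_eq_vec_def)
      show "h \<alpha> (a + \<alpha>) = k \<alpha> a" unfolding h_def k_def by simp
    next
      fix b assume "b \<in> S1 \<alpha>"
      then show "b - \<alpha> \<in> ?S" unfolding S1_def by (auto simp: less_eq_vec_def)
    qed auto
    then show ?thesis using hsum1 T1_def by (simp add: has_sum_iff)
  qed
  have sumT1: "(\<Sum>\<alpha>\<in>?A. c \<alpha> * T1 \<alpha>) = 0"
  proof -
    have "((\<lambda>y. \<Sum>\<alpha>\<in>?A. c \<alpha> * k \<alpha> y) has_sum (\<Sum>\<alpha>\<in>?A. c \<alpha> * T1 \<alpha>)) ?S"
      using finA by (intro has_sum_finsum has_sum_cmult_right kS) auto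
    moreover have "((\<lambda>y. \<Sum>\<alpha>\<in>?A. c \<alpha> * k \<alpha> y) has_sum 0) ?S"
    proof (rule has_sum_0)
      fix y assume "y \<in> ?S"
      then have "(\<Sum>\<alpha>\<in>?A. c \<alpha> * f (y + \<alpha>)) = 0" using recurrence by simp
      then show "(\<Sum>\<alpha>\<in>?A. c \<alpha> * k \<alpha> y) = 0"
        unfolding k_def by (simp add: sum_divide_distrib[symmetric])
    qed
    ultimately show ?thesis using has_sum_unique by blast
  qed
  have S2X0: "S2 \<alpha> \<subseteq> X0" if "\<alpha> \<le> m" for \<alpha>
    unfolding S2_def X0_def using that order_trans by blast
  have pS2: "(p \<alpha> has_sum T2 \<alpha>) (S2 \<alpha>)" if "\<alpha> \<le> m" for \<alpha>
  proof -
    have "(h \<alpha> has_sum T2 \<alpha>) (S2 \<alpha>)" using hsum2 T2_def by (simp add: has_sum_iff)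
    moreover have "h \<alpha> x = p \<alpha> x" if "x \<in> S2 \<alpha>" for x
      using S2X0[OF \<open>\<alpha> \<le> m\<close>] that boundary unfolding h_def p_def X0_def by auto
    ultimately show ?thesis using has_sum_cong by blast
  qed
  have PF: "P * F = (\<Sum>\<alpha>\<in>?A. c \<alpha> * T2 \<alpha>)"
  proof -
    have "P * F = (\<Sum>\<alpha>\<in>?A. c \<alpha> * (zpow z \<alpha> * F))"
      unfolding P_def by (simp add: sum_distrib_right mult.assoc)
    also have "\<dots> = (\<Sum>\<alpha>\<in>?A. c \<alpha> * T1 \<alpha>) + (\<Sum>\<alpha>\<in>?A. c \<alpha> * T2 \<alpha>)"
      unfolding split by (simp add: distrib_left sum.distrib)
    finally show ?thesis using sumT1 by simp
  qed
  have part1: "(\<forall>\<alpha>. 0 \<le> \<alpha> \<and> \<alpha> \<le> m \<longrightarrow> (\<lambda>\<tau>. \<phi> \<tau> / zpow z (\<tau> - \<alpha> + onesv)) summable_on {\<tau>. 0 \<le> \<tau> \<and> \<not> \<alpha> \<le> \<tau>})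
     \<and> P * F = (\<Sum>\<alpha>\<in>{\<alpha>. 0 \<le> \<alpha> \<and> \<alpha> \<le> m}.
                 c \<alpha> * (\<Sum>\<^sub>\<infinity>\<tau>\<in>{\<tau>. 0 \<le> \<tau> \<and> \<not> \<alpha> \<le> \<tau>}. \<phi> \<tau> / zpow z (\<tau> - \<alpha> + onesv)))"
  proof
    show "\<forall>\<alpha>. 0 \<le> \<alpha> \<and> \<alpha> \<le> m \<longrightarrow> (\<lambda>\<tau>. \<phi> \<tau> / zpow z (\<tau> - \<alpha> + onesv)) summable_on {\<tau>. 0 \<le> \<tau> \<and> \<not> \<alpha> \<le> \<tau>}"
      using pS2 has_sum_imp_summable unfolding p_def S2_def by blast
    have "(\<Sum>\<^sub>\<infinity>\<tau>\<in>{\<tau>. 0 \<le> \<tau> \<and> \<not> \<alpha> \<le> \<tau>}. \<phi> \<tau> / zpow z (\<tau> - \<alpha> + onesv)) = T2 \<alpha>" if "\<alpha> \<in> ?A" for \<alpha>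
      using pS2[of \<alpha>] that unfolding p_def S2_def by (simp add: has_sum_iff)
    then show "P * F = (\<Sum>\<alpha>\<in>{\<alpha>. 0 \<le> \<alpha> \<and> \<alpha> \<le> m}.
                 c \<alpha> * (\<Sum>\<^sub>\<infinity>\<tau>\<in>{\<tau>. 0 \<le> \<tau> \<and> \<not> \<alpha> \<le> \<tau>}. \<phi> \<tau> / zpow z (\<tau> - \<alpha> + onesv)))"
      unfolding PF by (intro sum.cong) auto
  qed
  define D where "D = {\<sigma>::int^'n. \<sigma> \<le> m \<and> \<not> \<sigma> \<le> 0}"
  define e where "e \<alpha> \<sigma> = (if \<sigma> \<le> \<alpha> then c \<alpha> * (\<phi> (\<alpha> - \<sigma>) * zpow z (\<sigma> - onesv)) else 0)" for \<alpha> \<sigma>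
  have eD: "(e \<alpha> has_sum (c \<alpha> * T2 \<alpha>)) D" if "\<alpha> \<in> ?A" for \<alpha>
  proof -
    let ?D' = "{\<sigma>::int^'n. \<sigma> \<le> \<alpha> \<and> \<not> \<sigma> \<le> 0}"
    have "((\<lambda>\<sigma>. \<phi> (\<alpha> - \<sigma>) * zpow z (\<sigma> - onesv)) has_sum T2 \<alpha>) ?D' = (p \<alpha> has_sum T2 \<alpha>) (S2 \<alpha>)"
    proof (rule has_sum_reindex_bij_witness[where j="\<lambda>\<sigma>. \<alpha> - \<sigma>" and i="\<lambda>\<tau>. \<alpha> - \<tau>"])
      fix a assume "a \<in> ?D'"
      then show "\<alpha> - a \<in> S2 \<alpha>" unfolding S2_def by (auto simp: less_eq_vec_def)
      have "\<alpha> - a - \<alpha> + onesv = - (a - onesv)" by simp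
      then have "zpow z (\<alpha> - a - \<alpha> + onesv) = inverse (zpow z (a - onesv))"
        by (metis zpow_neg)
      then show "p \<alpha> (\<alpha> - a) = \<phi> (\<alpha> - a) * zpow z (a - onesv)"
        unfolding p_def by (simp add: divide_inverse)
    next
      fix b assume "b \<in> S2 \<alpha>"
      then show "\<alpha> - b \<in> ?D'" unfolding S2_def by (auto simp: less_eq_vec_def)
    qed auto
    then have "((\<lambda>\<sigma>. \<phi> (\<alpha> - \<sigma>) * zpow z (\<sigma> - onesv)) has_sum T2 \<alpha>) ?D'"
      using pS2[of \<alpha>] that by simp
    then have "((\<lambda>\<sigma>. c \<alpha> * (\<phi> (\<alpha> - \<sigma>) * zpow z (\<sigma> - onesv))) has_sum (c \<alpha> * T2 \<alpha>)) ?D'"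
      by (rule has_sum_cmult_right)
    moreover have "?D' \<subseteq> D" unfolding D_def using that order_trans by auto
    ultimately show ?thesis
      by (subst has_sum_cong_neutral[symmetric, where S="?D'"]) (auto simp: e_def D_def)
  qed
  have part2: "((\<lambda>\<tau>. (\<Sum>\<alpha>\<in>{\<alpha>. 0 \<le> \<alpha> \<and> \<tau> \<le> \<alpha> \<and> \<alpha> \<le> m}. c \<alpha> * \<phi> (\<alpha> - \<tau>)) * zpow z (\<tau> - onesv))
        has_sum (P * F)) {\<tau>. \<tau> \<le> m \<and> \<not> \<tau> \<le> 0}"
  proof -
    have "((\<lambda>\<sigma>. \<Sum>\<alpha>\<in>?A. e \<alpha> \<sigma>) has_sum (P * F)) D"
      unfolding PF using finA eD by (intro has_sum_finsum) auto
    moreover have "(\<Sum>\<alpha>\<in>?A. e \<alpha> \<sigma>) = (\<Sum>\<alpha>\<in>{\<alpha>. 0 \<le> \<alpha> \<and> \<sigma> \<le> \<alpha> \<and> \<alpha> \<le> m}. c \<alpha> * \<phi> (\<alpha> - \<sigma>)) * zpow z (\<sigma> - onesv)" for \<sigma>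
    proof -
      have "(\<Sum>\<alpha>\<in>?A. e \<alpha> \<sigma>) = (\<Sum>\<alpha>\<in>{\<alpha>\<in>?A. \<sigma> \<le> \<alpha>}. c \<alpha> * (\<phi> (\<alpha> - \<sigma>) * zpow z (\<sigma> - onesv)))"
        unfolding e_def by (rule sum.inter_filter[OF finA, symmetric])
      also have "{\<alpha>\<in>?A. \<sigma> \<le> \<alpha>} = {\<alpha>. 0 \<le> \<alpha> \<and> \<sigma> \<le> \<alpha> \<and> \<alpha> \<le> m}" by auto
      finally show ?thesis by (simp add: sum_distrib_right mult.assoc)
    qed
    ultimately show ?thesis unfolding D_def by simp
  qed
  define e4 where "e4 \<alpha> \<tau> = (if \<not> \<alpha> \<le> \<tau> then c \<alpha> * zpow z \<alpha> * (\<phi> \<tau> / zpow z (\<tau> + onesv)) else 0)" for \<alpha> \<tau>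
  have e4X: "(e4 \<alpha> has_sum (c \<alpha> * T2 \<alpha>)) X0" if "\<alpha> \<in> ?A" for \<alpha>
  proof -
    have "(p \<alpha> has_sum T2 \<alpha>) (S2 \<alpha>)" using pS2 that by simp
    moreover have "p \<alpha> \<tau> = zpow z \<alpha> * (\<phi> \<tau> / zpow z (\<tau> + onesv))" for \<tau>
    proof -
      have "\<tau> - \<alpha> + onesv = (\<tau> + onesv) - \<alpha>" by simp
      then have "zpow z (\<tau> - \<alpha> + onesv) = zpow z (\<tau> + onesv) / zpow z \<alpha>"
        using zpow_diff[OF nz] by metis
      then show ?thesis unfolding p_def using zpow_nz[OF nz, of \<alpha>] by simp
    qed
    ultimately have "((\<lambda>\<tau>. c \<alpha> * zpow z \<alpha> * (\<phi> \<tau> / zpow z (\<tau> + onesv))) has_sum (c \<alpha> * T2 \<alpha>)) (S2 \<alpha>)"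
      using has_sum_cmult_right[where f="p \<alpha>" and a="T2 \<alpha>" and A="S2 \<alpha>" and c="c \<alpha>"] by (simp add: mult.assoc)
    moreover have "S2 \<alpha> \<subseteq> X0" using S2X0 that by simp
    ultimately show ?thesis
      by (subst has_sum_cong_neutral[symmetric, where S="S2 \<alpha>"]) (auto simp: e4_def X0_def S2_def)
  qed
  have part4: "((\<lambda>\<tau>. (\<Sum>\<alpha>\<in>{\<alpha>. 0 \<le> \<alpha> \<and> \<alpha> \<le> m \<and> \<not> \<alpha> \<le> \<tau>}. c \<alpha> * zpow z \<alpha>) * \<phi> \<tau> / zpow z (\<tau> + onesv))
        has_sum (P * F)) X0"
  proof -
    have "((\<lambda>\<sigma>. \<Sum>\<alpha>\<in>?A. e4 \<alpha> \<sigma>) has_sum (P * F)) X0"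
      unfolding PF using finA e4X by (intro has_sum_finsum) auto
    moreover have "(\<Sum>\<alpha>\<in>?A. e4 \<alpha> \<tau>) = (\<Sum>\<alpha>\<in>{\<alpha>. 0 \<le> \<alpha> \<and> \<alpha> \<le> m \<and> \<not> \<alpha> \<le> \<tau>}. c \<alpha> * zpow z \<alpha>) * \<phi> \<tau> / zpow z (\<tau> + onesv)" for \<tau>
    proof -
      have "(\<Sum>\<alpha>\<in>?A. e4 \<alpha> \<tau>) = (\<Sum>\<alpha>\<in>{\<alpha>\<in>?A. \<not> \<alpha> \<le> \<tau>}. c \<alpha> * zpow z \<alpha> * (\<phi> \<tau> / zpow z (\<tau> + onesv)))"
        unfolding e4_def by (rule sum.inter_filter[OF finA, symmetric])
      also have "{\<alpha>\<in>?A. \<not> \<alpha> \<le> \<tau>} = {\<alpha>. 0 \<le> \<alpha> \<and> \<alpha> \<le> m \<and> \<not> \<alpha> \<le> \<tau>}" by auto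
      finally show ?thesis by (simp add: sum_distrib_right sum_divide_distrib)
    qed
    ultimately show ?thesis by simp
  qed
  define q where "q \<tau> = \<phi> \<tau> / zpow z (\<tau> + onesv)" for \<tau>
  have X0S: "X0 \<subseteq> ?S" unfolding X0_def by auto
  have qsum: "q summable_on X0"
  proof -
    have "g summable_on X0" using summable_on_subset_banach[OF gsum X0S] .
    moreover have "g \<tau> = q \<tau>" if "\<tau> \<in> X0" for \<tau> using that boundary unfolding g_def q_def X0_def by auto
    ultimately show ?thesis using summable_on_cong by metis
  qed
  have part3: "(\<lambda>\<tau>. \<phi> \<tau> / zpow z (\<tau> + onesv)) summable_on X0
     \<and> (\<lambda>\<tau>. (\<Sum>\<alpha>\<in>{\<alpha>. 0 \<le> \<alpha> \<and> \<alpha> \<le> \<tau>}. c \<alpha> * zpow z \<alpha>) * \<phi> \<tau> / zpow z (\<tau> + onesv)) summable_on X0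
     \<and> P * F = P * (\<Sum>\<^sub>\<infinity>\<tau>\<in>X0. \<phi> \<tau> / zpow z (\<tau> + onesv))
               - (\<Sum>\<^sub>\<infinity>\<tau>\<in>X0. (\<Sum>\<alpha>\<in>{\<alpha>. 0 \<le> \<alpha> \<and> \<alpha> \<le> \<tau>}. c \<alpha> * zpow z \<alpha>) * \<phi> \<tau> / zpow z (\<tau> + onesv))"
  proof -
    let ?r = "\<lambda>\<tau>. (\<Sum>\<alpha>\<in>{\<alpha>. 0 \<le> \<alpha> \<and> \<alpha> \<le> \<tau>}. c \<alpha> * zpow z \<alpha>) * \<phi> \<tau> / zpow z (\<tau> + onesv)"
    let ?s = "\<lambda>\<tau>. (\<Sum>\<alpha>\<in>{\<alpha>. 0 \<le> \<alpha> \<and> \<alpha> \<le> m \<and> \<not> \<alpha> \<le> \<tau>}. c \<alpha> * zpow z \<alpha>) * \<phi> \<tau> / zpow z (\<tau> + onesv)"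
    define \<Phi> where "\<Phi> = infsum q X0"
    have hq: "((\<lambda>\<tau>. P * q \<tau>) has_sum (P * \<Phi>)) X0"
      using qsum unfolding \<Phi>_def by (intro has_sum_cmult_right) simp
    have hd: "((\<lambda>\<tau>. P * q \<tau> - ?s \<tau>) has_sum (P * \<Phi> - P * F)) X0"
      by (rule has_sum_diff'[OF hq part4])
    have req: "?r \<tau> = P * q \<tau> - ?s \<tau>" if "\<tau> \<in> X0" for \<tau>
    proof -
      have "0 \<le> \<tau>" using that unfolding X0_def by simp
      have e1: "(\<Sum>\<alpha>\<in>{\<alpha>. 0 \<le> \<alpha> \<and> \<alpha> \<le> \<tau>}. c \<alpha> * zpow z \<alpha>) = (\<Sum>\<alpha>\<in>{\<alpha>\<in>?A. \<alpha> \<le> \<tau>}. c \<alpha> * zpow z \<alpha>)"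
        by (rule sum.mono_neutral_right) (use box_finite[of 0 \<tau>] c_zero in auto)
      have "?A = {\<alpha>\<in>?A. \<alpha> \<le> \<tau>} \<union> {\<alpha>. 0 \<le> \<alpha> \<and> \<alpha> \<le> m \<and> \<not> \<alpha> \<le> \<tau>}" by auto
      then have "P = (\<Sum>\<alpha>\<in>{\<alpha>\<in>?A. \<alpha> \<le> \<tau>}. c \<alpha> * zpow z \<alpha>) + (\<Sum>\<alpha>\<in>{\<alpha>. 0 \<le> \<alpha> \<and> \<alpha> \<le> m \<and> \<not> \<alpha> \<le> \<tau>}. c \<alpha> * zpow z \<alpha>)"
        unfolding P_def using finA by (metis (no_types, lifting) sum.union_disjoint finite_Un disjoint_iff mem_Collect_eq)
      then show ?thesis unfolding e1 q_def by (simp add: algebra_simps)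
    qed
    have hr: "(?r has_sum (P * \<Phi> - P * F)) X0"
      using hd req has_sum_cong by (metis (no_types, lifting))
    have "P * F = P * \<Phi> - infsum ?r X0" using hr by (simp add: has_sum_iff)
    then show ?thesis using hr qsum unfolding \<Phi>_def q_def by (simp add: has_sum_iff)
  qed
  show ?thesis using part1 part2 part3 part4 by blast
qed

end
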